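(* For every positive integer $m$ one has $\mathcal C_m\subseteq \mathcal C_{m+1}$. Moreover, every odd integer $k\ge 3$ belongs to $\mathcal C_{u}$ where $u=\lceil \log_2 k\rceil$; consequently the set of all odd positive integers equals $\bigcup_{m\ge1}\mathcal C_m$.
   Context: For a positive integer $m$, $\mathcal C_m$ is the set of odd positive integers $k$ for which there exist integers $0\le j_1<j_2<\cdots<j_m\le m+k-2$ such that $2^{k+m}-1\equiv \sum_{i=1}^m 2^{j_i}\pmod k$. *)

theory Defs
  imports "HOL-Number_Theory.Number_Theory"
begin

text \<open>A strictly increasing
  m-tuple of indices is the same as an m-element subset J of {0..m+k-2}.\<close>
definition Cset :: "nat \<Rightarrow> nat set" where
  "Cset m = {k::nat. odd k \<and> 0 < k \<and>
     (\<exists>J. J \<subseteq> {0..m + k - 2} \<and> card J = m \<and>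
        [2 ^ (k + m) - 1 = (\<Sum>j\<in>J. 2 ^ j)] (mod k))}"

end

theory Submission
  imports Defs
begin

lemma bitsum: "(\<Sum>j\<in>{j. j < u \<and> bit (n::nat) j}. (2::nat) ^ j) = n mod 2 ^ u"
proof (induction u)
  case 0 then show ?case by simp
next
  case (Suc u)
  have eq: "{j. j < Suc u \<and> bit n j} = {j. j < u \<and> bit n j} \<union> (if bit n u then {u} else {})"
    by (auto simp: less_Suc_eq)
  have m: "n mod 2 ^ Suc u = n mod 2 ^ u + 2 ^ u * ((n div 2 ^ u) mod 2)"
  proof -
    have "(2::nat) ^ Suc u = 2 ^ u * 2" by simp
    then show ?thesis using mod_mult2_eq[of n "2 ^ u" 2] by (simp only: ac_simps)
  qed
  show ?case
  proof (cases "bit n u")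
    case True
    then have "(n div 2 ^ u) mod 2 = 1" by (simp add: bit_iff_odd odd_iff_mod_2_eq_one)
    moreover have "finite {j. j < u \<and> bit n j}" by simp
    ultimately show ?thesis using True Suc m by (simp add: eq)
  next
    case False
    then have "(n div 2 ^ u) mod 2 = 0" by (simp add: bit_iff_odd)
    then show ?thesis using False Suc m by (simp add: eq)
  qed
qed

lemma part1:
  assumes m: "0 < m" and k: "k \<in> Cset m" shows "k \<in> Cset (m + 1)"
proof -
  from k obtain J where kk: "odd k" "0 < k" and J: "J \<subseteq> {0..m + k - 2}" "card J = m"
    and c: "[2 ^ (k + m) - 1 = (\<Sum>j\<in>J. 2 ^ j)] (mod k)"
    unfolding Cset_def by auto
  have fin: "finite J" using J(1) finite_subset by blast
  define J' where "J' = insert 0 (Suc ` J)"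
  have "J' \<subseteq> {0..(m + 1) + k - 2}" using J(1) m kk unfolding J'_def by auto
  moreover have "card J' = m + 1" unfolding J'_def using fin J(2)
    by (simp add: card_image)
  moreover have "(\<Sum>j\<in>J'. (2::nat) ^ j) = 1 + 2 * (\<Sum>j\<in>J. 2 ^ j)"
    unfolding J'_def using fin by (simp add: sum.reindex sum_distrib_left)
  moreover have "[2 ^ (k + (m + 1)) - 1 = 1 + 2 * (\<Sum>j\<in>J. (2::nat) ^ j)] (mod k)"
  proof -
    have "[1 + 2 * (2 ^ (k + m) - 1) = 1 + 2 * (\<Sum>j\<in>J. (2::nat) ^ j)] (mod k)"
      using c by (intro cong_add cong_mult) auto
    moreover have "1 + 2 * (2 ^ (k + m) - 1) = 2 ^ (k + (m + 1)) - (1::nat)"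
    proof -
      have "(1::nat) \<le> 2 ^ (k + m)" by simp
      have a: "1 \<le> X \<Longrightarrow> 1 + 2 * (X - 1) = 2*X - (1::nat)" for X by arith
      show ?thesis using a[of "2 ^ (k + m)"] by simp
    qed
    ultimately show ?thesis by simp
  qed
  ultimately show ?thesis using kk unfolding Cset_def by auto
qed

lemma part2:
  assumes k: "odd k" "3 \<le> k" shows "k \<in> Cset (nat \<lceil>log 2 (real k)\<rceil>)"
proof -
  define u where "u = nat \<lceil>log 2 (real k)\<rceil>"
  have lg: "log 2 (real k) > 1" using k by (simp add: less_log_iff)
  then have u1: "u \<ge> 1" unfolding u_def by linarith
  have "log 2 (real k) \<le> real u" unfolding u_def using lg by linarith
  then have "real k \<le> 2 powr real u" using k by (simp add: log_le_iff)
  then have "real k \<le> real (2 ^ u)" by (simp add: powr_realpow)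
  then have kle: "k \<le> 2 ^ u" by linarith
  have "real u - 1 < log 2 (real k)" unfolding u_def using lg by linarith
  then have "2 powr (real u - 1) < real k" using k by (simp add: less_log_iff)
  moreover have "2 powr (real u - 1) = real (2 ^ (u - 1))"
    using u1 by (simp add: powr_realpow [symmetric] of_nat_diff)
  ultimately have klo: "2 ^ (u - 1) < k" by linarith
  have kne: "k \<noteq> 2 ^ u" proof
    assume "k = 2 ^ u"
    then have "even k" using u1 by simp
    then show False using k by simp
  qed
  then have klt: "k < 2 ^ u" using kle by simp
  have uk: "u < k"
  proof -
    have "u < 2 ^ (u - 1) + 1" using u1
      by (metis Suc_diff_le Suc_eq_plus1 diff_Suc_1 less_exp not_less_eq)
    then show ?thesis using klo by linarith
  qed
  define n where "n = k - 1"
  have nlt: "n < 2 ^ u" using klt unfolding n_def by simp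
  have topbit: "bit n (u - 1)"
  proof -
    have "n div 2 ^ (u - 1) = 1"
    proof -
      have "2 ^ (u - 1) \<le> n" using klo unfolding n_def by simp
      moreover have "n < 2 * 2 ^ (u - 1)" using nlt u1
        by (metis One_nat_def Suc_diff_le diff_Suc_1 power_Suc)
      ultimately show ?thesis
        by (intro div_nat_eqI) auto
    qed
    then show ?thesis by (simp add: bit_iff_odd)
  qed
  define A where "A = {j. j < u \<and> bit n j}"
  define B0 where "B0 = {j. j < u \<and> \<not> bit n j}"
  define J where "J = A \<union> (\<lambda>j. k + j) ` B0"
  have finA: "finite A" "finite B0" unfolding A_def B0_def by auto
  have disj: "A \<inter> (\<lambda>j. k + j) ` B0 = {}" unfolding A_def using uk by auto
  have AB: "A \<union> B0 = {..<u}" "A \<inter> B0 = {}" unfolding A_def B0_def by auto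
  have cardu: "card A + card B0 = u"
    using card_Un_disjoint[OF finA AB(2)] AB(1) by simp
  have cardJ: "card J = u" unfolding J_def
    using card_Un_disjoint[OF finA(1) _ disj] finA cardu by (simp add: card_image)
  have sub: "J \<subseteq> {0..u + k - 2}"
  proof
    fix x assume "x \<in> J"
    then consider "x \<in> A" | j where "j \<in> B0" "x = k + j" unfolding J_def by auto
    then show "x \<in> {0..u + k - 2}"
    proof cases
      case 1 then show ?thesis unfolding A_def using k by auto
    next
      case 2
      then have "j < u" "j \<noteq> u - 1" using topbit unfolding B0_def by auto
      then show ?thesis using 2 by auto
    qed
  qed
  have sA: "(\<Sum>j\<in>A. (2::nat) ^ j) = n" unfolding A_def using bitsum[of u n] nlt by simp
  have sB0: "(\<Sum>j\<in>B0. (2::nat) ^ j) = 2 ^ u - 1 - n"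
  proof -
    have "(\<Sum>j\<in>A. (2::nat) ^ j) + (\<Sum>j\<in>B0. 2 ^ j) = (\<Sum>j<u. 2 ^ j)"
      using sum.union_disjoint[OF finA AB(2), of "\<lambda>j. (2::nat) ^ j"] AB(1) by simp
    also have "\<dots> = 2 ^ u - 1" by (induction u) auto
    finally show ?thesis using sA by simp
  qed
  have sJ: "(\<Sum>j\<in>J. (2::nat) ^ j) = n + 2 ^ k * (2 ^ u - 1 - n)"
  proof -
    have "(\<Sum>j\<in>J. (2::nat) ^ j) = (\<Sum>j\<in>A. 2 ^ j) + (\<Sum>j\<in>(\<lambda>j. k + j) ` B0. 2 ^ j)"
      unfolding J_def using finA disj by (simp add: sum.union_disjoint)
    also have "(\<Sum>j\<in>(\<lambda>j. k + j) ` B0. (2::nat) ^ j) = (\<Sum>j\<in>B0. 2 ^ k * 2 ^ j)"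
      by (simp add: sum.reindex power_add)
    also have "(\<Sum>j\<in>B0. (2::nat) ^ k * 2 ^ j) = 2 ^ k * (\<Sum>j\<in>B0. 2 ^ j)"
      by (simp add: sum_distrib_left)
    finally show ?thesis using sA sB0 by simp
  qed
  have eqn: "2 ^ (k + u) - 1 = n + 2 ^ k * (2 ^ u - 1 - n) + k * (2 ^ k - 1)"
  proof -
    have i1: "(1::int) \<le> 2 ^ (k + u)" by simp
    have e1: "int (2 ^ (k + u) - 1) = 2 ^ (k + u) - 1" using i1 by (simp add: of_nat_diff)
    have e2: "int (n + 2 ^ k * (2 ^ u - 1 - n) + k * (2 ^ k - 1))
        = int n + 2 ^ k * (2 ^ u - 1 - int n) + int k * (2 ^ k - 1)"
      using nlt by (simp add: of_nat_diff)
    have e3: "int n = int k - 1" unfolding n_def using k by simp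
    have "int (2 ^ (k + u) - 1) = int (n + 2 ^ k * (2 ^ u - 1 - n) + k * (2 ^ k - 1))"
      unfolding e1 e2 e3 by (simp add: algebra_simps power_add)
    then show ?thesis by (simp only: of_nat_eq_iff)
  qed
  have cong: "[2 ^ (k + u) - 1 = (\<Sum>j\<in>J. (2::nat) ^ j)] (mod k)"
    unfolding sJ eqn by (simp add: cong_def)
  show ?thesis unfolding u_def[symmetric] Cset_def
    using k sub cardJ cong by auto
qed

lemma one_in: "1 \<in> Cset 1"
  unfolding Cset_def by (auto intro!: exI[of _ "{0}"] simp: cong_def)

theorem mainTheorem4:
  shows "(\<forall>m::nat. 0 < m \<longrightarrow> Cset m \<subseteq> Cset (m + 1))
    \<and> (\<forall>k::nat. odd k \<and> 3 \<le> k \<longrightarrow> k \<in> Cset (nat \<lceil>log 2 (real k)\<rceil>))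
    \<and> {k::nat. odd k \<and> 0 < k} = (\<Union>m\<in>{1..}. Cset m)"
proof (intro conjI)
  show "\<forall>m::nat. 0 < m \<longrightarrow> Cset m \<subseteq> Cset (m + 1)" using part1 by blast
  show "\<forall>k::nat. odd k \<and> 3 \<le> k \<longrightarrow> k \<in> Cset (nat \<lceil>log 2 (real k)\<rceil>)" using part2 by blast
  show "{k::nat. odd k \<and> 0 < k} = (\<Union>m\<in>{1..}. Cset m)"
  proof
    show "(\<Union>m\<in>{1..}. Cset m) \<subseteq> {k. odd k \<and> 0 < k}" unfolding Cset_def by auto
  next
    show "{k::nat. odd k \<and> 0 < k} \<subseteq> (\<Union>m\<in>{1..}. Cset m)"
    proof
      fix k :: nat assume h: "k \<in> {k. odd k \<and> 0 < k}"
      show "k \<in> (\<Union>m\<in>{1..}. Cset m)"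
      proof (cases "k = 1")
        case True then show ?thesis using one_in by blast
      next
        case False
        then have k3: "3 \<le> k" using h by (auto elim: oddE)
        have "log 2 (real k) > 1" using k3 by (simp add: less_log_iff)
        then have "nat \<lceil>log 2 (real k)\<rceil> \<in> {1..}" by (simp add: le_nat_iff)
        then show ?thesis using part2[of k] h k3 by blast
      qed
    qed
  qed
qed

end
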